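(* The partial order $\unlhd$ on $(\mathbb{M}_{\mathrm{GHP}},d_{\mathrm{GHP}})$ is closed, i.e. its graph $\{(\mathcal{X},\mathcal{X}'):\mathcal{X}\unlhd\mathcal{X}'\}$ is closed in $\mathbb{M}_{\mathrm{GHP}}\times\mathbb{M}_{\mathrm{GHP}}$; equivalently, if $\mathcal{X}_n\to\mathcal{X}_\infty$, $\mathcal{X}'_n\to\mathcal{X}'_\infty$ and $\mathcal{X}_n\unlhd\mathcal{X}'_n$ for all $n$, then $\mathcal{X}_\infty\unlhd\mathcal{X}'_\infty$.
   Context: $\mathbb{M}_{\mathrm{GHP}}$ is the space of measure-preserving isometry classes of compact metric spaces with a finite Borel measure, with the Gromov--Hausdorff--Prokhorov metric $d_{\mathrm{GHP}}$ (infimum over common isometric embeddings of Hausdorff distance of images plus Prokhorov distance of pushed-forward measures). $[X,d,\mu]\unlhd[X',d',\mu']$ means there is a surjective map $\phi:X'\to X$ with $d(\phi(x'),\phi(y'))\le d'(x',y')$ for all $x',y'\in X'$ and $\mu(A)\le\mu'(\phi^{-1}(A))$ for all Borel $A\subset X$. *)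

theory Defs
  imports "HOL-Analysis.Analysis"
begin

text \<open>A (representative of a) compact metric measure space: carrier X, metric d on X,
  finite Borel measure mu on X.  Isometry classes are not formed explicitly; all notions
  below are invariant under measure-preserving isometries.\<close>
type_synonym 'a mms = "'a set \<times> ('a \<Rightarrow> 'a \<Rightarrow> real) \<times> 'a measure"

definition mborel :: "'a set \<Rightarrow> ('a \<Rightarrow> 'a \<Rightarrow> real) \<Rightarrow> 'a measure" where
  "mborel X d = sigma X {U. openin (Metric_space.mtopology X d) U}"

definition is_mms :: "'a mms \<Rightarrow> bool" where
  "is_mms S \<longleftrightarrow> (case S of (X, d, \<mu>) \<Rightarrow>
     Metric_space X d \<and> compact_space (Metric_space.mtopology X d) \<and>
     finite_measure \<mu> \<and> space \<mu> = X \<and> sets \<mu> = sets (mborel X d))"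

definition nbhd :: "'z set \<Rightarrow> ('z \<Rightarrow> 'z \<Rightarrow> real) \<Rightarrow> 'z set \<Rightarrow> real \<Rightarrow> 'z set" where
  "nbhd Z dZ A \<epsilon> = {z \<in> Z. \<exists>a\<in>A. dZ z a < \<epsilon>}"

text \<open>Hausdorff distance between subsets A, B of (Z,dZ) (infinite if no epsilon works).\<close>
definition hausdorff_dist :: "'z set \<Rightarrow> ('z \<Rightarrow> 'z \<Rightarrow> real) \<Rightarrow> 'z set \<Rightarrow> 'z set \<Rightarrow> ereal" where
  "hausdorff_dist Z dZ A B =
     Inf {ereal \<epsilon> | \<epsilon>. \<epsilon> > 0 \<and> A \<subseteq> nbhd Z dZ B \<epsilon> \<and> B \<subseteq> nbhd Z dZ A \<epsilon>}"

definition prokhorov_dist :: "'z set \<Rightarrow> ('z \<Rightarrow> 'z \<Rightarrow> real) \<Rightarrow> 'z measure \<Rightarrow> 'z measure \<Rightarrow> ereal" where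
  "prokhorov_dist Z dZ \<mu> \<nu> =
     Inf {ereal \<epsilon> | \<epsilon>. \<epsilon> > 0 \<and>
        (\<forall>A \<in> sets (mborel Z dZ).
           measure \<mu> A \<le> measure \<nu> (nbhd Z dZ A \<epsilon>) + \<epsilon> \<and>
           measure \<nu> A \<le> measure \<mu> (nbhd Z dZ A \<epsilon>) + \<epsilon>)}"

definition isometric_embedding ::
  "'a set \<Rightarrow> ('a \<Rightarrow> 'a \<Rightarrow> real) \<Rightarrow> 'z set \<Rightarrow> ('z \<Rightarrow> 'z \<Rightarrow> real) \<Rightarrow> ('a \<Rightarrow> 'z) \<Rightarrow> bool" where
  "isometric_embedding X d Z dZ \<phi> \<longleftrightarrow>
     \<phi> \<in> X \<rightarrow> Z \<and> (\<forall>x\<in>X. \<forall>y\<in>X. dZ (\<phi> x) (\<phi> y) = d x y)"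

text \<open>Since the union of the two images has cardinality at most that
  of the disjoint union of the carriers, it suffices to let Z range over subsets of the
  type 'a + 'a.\<close>
definition dGHP :: "'a mms \<Rightarrow> 'a mms \<Rightarrow> ereal" where
  "dGHP S S' = (case S of (X, d, \<mu>) \<Rightarrow> case S' of (X', d', \<mu>') \<Rightarrow>
     Inf {hausdorff_dist Z dZ (\<phi> ` X) (\<phi>' ` X')
            + prokhorov_dist Z dZ (distr \<mu> (mborel Z dZ) \<phi>) (distr \<mu>' (mborel Z dZ) \<phi>')
          | (Z :: ('a + 'a) set) dZ \<phi> \<phi>'. Metric_space Z dZ \<and>
             isometric_embedding X d Z dZ \<phi> \<and> isometric_embedding X' d' Z dZ \<phi>'})"

definition mms_le :: "'a mms \<Rightarrow> 'a mms \<Rightarrow> bool" where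
  "mms_le S S' = (case S of (X, d, \<mu>) \<Rightarrow> case S' of (X', d', \<mu>') \<Rightarrow>
     (\<exists>\<phi>. \<phi> ` X' = X \<and> (\<forall>x\<in>X'. \<forall>y\<in>X'. d (\<phi> x) (\<phi> y) \<le> d' x y) \<and>
          (\<forall>A \<in> sets \<mu>. emeasure \<mu> A \<le> emeasure \<mu>' (\<phi> -` A \<inter> X'))))"

end

theory Submission
  imports Defs
begin

lemma opens_pow: "Metric_space X d \<Longrightarrow> {U. openin (Metric_space.mtopology X d) U} \<subseteq> Pow X"
  using openin_subset Metric_space.topspace_mtopology by fastforce

lemma sets_mborel: "Metric_space X d \<Longrightarrow> sets (mborel X d) = sigma_sets X {U. openin (Metric_space.mtopology X d) U}"
  unfolding mborel_def by (rule sets_measure_of[OF opens_pow]) assumption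

lemma space_mborel: "Metric_space X d \<Longrightarrow> space (mborel X d) = X"
  unfolding mborel_def by (rule space_measure_of[OF opens_pow]) assumption

lemma open_in_mborel: "Metric_space X d \<Longrightarrow> openin (Metric_space.mtopology X d) U \<Longrightarrow> U \<in> sets (mborel X d)"
  by (simp add: sets_mborel sigma_sets.Basic)

lemma nbhd_open:
  assumes "Metric_space Z dZ" "S \<subseteq> Z"
  shows "openin (Metric_space.mtopology Z dZ) (nbhd Z dZ S r)"
proof -
  interpret Metric_space Z dZ by fact
  show ?thesis unfolding openin_mtopology
  proof safe
    fix x assume "x \<in> nbhd Z dZ S r" then show "x \<in> Z" by (simp add: nbhd_def)
  next
    fix x assume "x \<in> nbhd Z dZ S r"
    then obtain s where s: "s \<in> S" "dZ x s < r" "x \<in> Z" by (auto simp: nbhd_def)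
    show "\<exists>\<rho>>0. mball x \<rho> \<subseteq> nbhd Z dZ S r"
    proof (intro exI conjI)
      show "r - dZ x s > 0" using s by simp
      show "mball x (r - dZ x s) \<subseteq> nbhd Z dZ S r"
      proof
        fix w assume w: "w \<in> mball x (r - dZ x s)"
        have "dZ w s \<le> dZ w x + dZ x s" using triangle[of w x s] w s assms(2) by auto
        also have "dZ w x = dZ x w" by (rule commute)
        finally have "dZ w s < r" using w by auto
        then show "w \<in> nbhd Z dZ S r" using w s unfolding nbhd_def by auto
      qed
    qed
  qed
qed

lemma lip_preimage_open:
  assumes "Metric_space X d" "Metric_space Z dZ" "f \<in> X \<rightarrow> Z"
    "\<forall>x\<in>X. \<forall>y\<in>X. dZ (f x) (f y) \<le> d x y"
    "openin (Metric_space.mtopology Z dZ) U"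
  shows "openin (Metric_space.mtopology X d) {x\<in>X. f x \<in> U}"
proof -
  interpret X: Metric_space X d by fact
  interpret Z: Metric_space Z dZ by fact
  show ?thesis unfolding X.openin_mtopology
  proof safe
    fix x assume x: "x \<in> X" "f x \<in> U"
    then obtain r where r: "r > 0" "Z.mball (f x) r \<subseteq> U" using assms(5) unfolding Z.openin_mtopology by blast
    show "\<exists>r>0. X.mball x r \<subseteq> {x \<in> X. f x \<in> U}"
    proof (intro exI conjI)
      show "r > 0" by fact
      show "X.mball x r \<subseteq> {x \<in> X. f x \<in> U}"
      proof
        fix y assume y: "y \<in> X.mball x r"
        then have "dZ (f x) (f y) < r" using assms(4) x y by fastforce
        then have "f y \<in> Z.mball (f x) r" using y x assms(3) by auto
        then show "y \<in> {x \<in> X. f x \<in> U}" using r y by auto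
      qed
    qed
  qed
qed

lemma lip_continuous:
  assumes "Metric_space X d" "Metric_space Z dZ" "f \<in> X \<rightarrow> Z"
    "\<forall>x\<in>X. \<forall>y\<in>X. dZ (f x) (f y) \<le> d x y"
  shows "continuous_map (Metric_space.mtopology X d) (Metric_space.mtopology Z dZ) f"
  unfolding continuous_map_def
  using lip_preimage_open[OF assms] assms(3)
  by (simp add: Metric_space.topspace_mtopology[OF assms(1)] Metric_space.topspace_mtopology[OF assms(2)])

lemma lip_measurable:
  assumes "Metric_space X d" "Metric_space Z dZ" "f \<in> X \<rightarrow> Z"
    "\<forall>x\<in>X. \<forall>y\<in>X. dZ (f x) (f y) \<le> d x y"
    "space M = X" "sets M = sets (mborel X d)"
  shows "f \<in> measurable M (mborel Z dZ)"
  unfolding mborel_def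
proof (rule measurable_measure_of[OF opens_pow[OF assms(2)]])
  show "f \<in> space M \<rightarrow> Z" using assms by simp
  fix U assume "U \<in> {U. openin (Metric_space.mtopology Z dZ) U}"
  then have "openin (Metric_space.mtopology X d) {x\<in>X. f x \<in> U}"
    using lip_preimage_open[OF assms(1-4)] by simp
  moreover have "f -` U \<inter> space M = {x\<in>X. f x \<in> U}" using assms(5) by auto
  ultimately show "f -` U \<inter> space M \<in> sets M" using assms(6) open_in_mborel[OF assms(1)] by metis
qed

lemma iso_lip: "isometric_embedding X d Z dZ \<psi> \<Longrightarrow> \<forall>x\<in>X. \<forall>y\<in>X. dZ (\<psi> x) (\<psi> y) \<le> d x y"
  "isometric_embedding X d Z dZ \<psi> \<Longrightarrow> \<psi> \<in> X \<rightarrow> Z"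
  unfolding isometric_embedding_def by auto

lemma prok_transfer:
  assumes Z: "Metric_space Z dZ" and X: "Metric_space X d" and X': "Metric_space X' d'"
    and fm: "finite_measure \<mu>" "finite_measure \<mu>'"
    and sp: "space \<mu> = X" "space \<mu>' = X'"
    and st: "sets \<mu> = sets (mborel X d)" "sets \<mu>' = sets (mborel X' d')"
    and iso: "isometric_embedding X d Z dZ \<psi>" "isometric_embedding X' d' Z dZ \<psi>'"
    and e1: "\<epsilon>1 < \<epsilon>"
    and P: "\<forall>B\<in>sets (mborel Z dZ). measure (distr \<mu> (mborel Z dZ) \<psi>) B
              \<le> measure (distr \<mu>' (mborel Z dZ) \<psi>') (nbhd Z dZ B \<epsilon>1) + \<epsilon>1"
    and A: "A \<in> sets \<mu>"
  shows "measure \<mu> A \<le> measure \<mu>' {x'\<in>X'. \<exists>a\<in>A. dZ (\<psi>' x') (\<psi> a) < \<epsilon>} + \<epsilon>"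
proof -
  interpret Zm: Metric_space Z dZ by fact
  interpret fm1: finite_measure \<mu> by fact
  interpret fm2: finite_measure \<mu>' by fact
  have AX: "A \<subseteq> X" using sets.sets_into_space[OF A] sp by simp
  have psiZ: "\<psi> ` A \<subseteq> Z" using AX iso_lip(2)[OF iso(1)] by auto
  define B where "B = nbhd Z dZ (\<psi> ` A) (\<epsilon> - \<epsilon>1)"
  have BZ: "B \<subseteq> Z" unfolding B_def nbhd_def by auto
  have Bs: "B \<in> sets (mborel Z dZ)" unfolding B_def
    by (rule open_in_mborel[OF Z nbhd_open[OF Z psiZ]])
  have NBs: "nbhd Z dZ B \<epsilon>1 \<in> sets (mborel Z dZ)"
    by (rule open_in_mborel[OF Z nbhd_open[OF Z BZ]])
  have m1: "\<psi> \<in> measurable \<mu> (mborel Z dZ)"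
    by (rule lip_measurable[OF X Z iso_lip(2)[OF iso(1)] iso_lip(1)[OF iso(1)] sp(1) st(1)])
  have m2: "\<psi>' \<in> measurable \<mu>' (mborel Z dZ)"
    by (rule lip_measurable[OF X' Z iso_lip(2)[OF iso(2)] iso_lip(1)[OF iso(2)] sp(2) st(2)])
  define T where "T = {x'\<in>X'. \<psi>' x' \<in> nbhd Z dZ (\<psi> ` A) \<epsilon>}"
  have Ts: "T \<in> sets \<mu>'" unfolding T_def st(2)
    by (rule open_in_mborel[OF X' lip_preimage_open[OF X' Z iso_lip(2)[OF iso(2)] iso_lip(1)[OF iso(2)] nbhd_open[OF Z psiZ]]])
  have T_eq: "T = {x'\<in>X'. \<exists>a\<in>A. dZ (\<psi>' x') (\<psi> a) < \<epsilon>}"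
    unfolding T_def nbhd_def using iso_lip(2)[OF iso(2)] by auto
  have "A \<subseteq> \<psi> -` B \<inter> space \<mu>"
  proof
    fix a assume a: "a \<in> A"
    then have "\<psi> a \<in> Z" using psiZ by auto
    then have "dZ (\<psi> a) (\<psi> a) = 0" by simp
    moreover have "\<epsilon> - \<epsilon>1 > 0" using e1 by simp
    ultimately show "a \<in> \<psi> -` B \<inter> space \<mu>" using a AX sp \<open>\<psi> a \<in> Z\<close> unfolding B_def nbhd_def by force
  qed
  then have "measure \<mu> A \<le> measure \<mu> (\<psi> -` B \<inter> space \<mu>)"
    using fm1.finite_measure_mono measurable_sets[OF m1 Bs] by blast
  also have "\<dots> = measure (distr \<mu> (mborel Z dZ) \<psi>) B" using measure_distr[OF m1 Bs] by simp
  also have "\<dots> \<le> measure (distr \<mu>' (mborel Z dZ) \<psi>') (nbhd Z dZ B \<epsilon>1) + \<epsilon>1" using P Bs by blast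
  also have "\<dots> = measure \<mu>' (\<psi>' -` nbhd Z dZ B \<epsilon>1 \<inter> space \<mu>') + \<epsilon>1"
    using measure_distr[OF m2 NBs] by simp
  also have "\<dots> \<le> measure \<mu>' T + \<epsilon>"
  proof -
    have "\<psi>' -` nbhd Z dZ B \<epsilon>1 \<inter> space \<mu>' \<subseteq> T"
    proof
      fix x assume x: "x \<in> \<psi>' -` nbhd Z dZ B \<epsilon>1 \<inter> space \<mu>'"
      then obtain b where b: "b \<in> B" "dZ (\<psi>' x) b < \<epsilon>1" "\<psi>' x \<in> Z" "x \<in> X'"
        unfolding nbhd_def using sp by auto
      then obtain a where a: "a \<in> A" "dZ b (\<psi> a) < \<epsilon> - \<epsilon>1" "b \<in> Z"
        unfolding B_def nbhd_def by auto
      have "dZ (\<psi>' x) (\<psi> a) \<le> dZ (\<psi>' x) b + dZ b (\<psi> a)"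
        using Zm.triangle b a psiZ by auto
      then have "dZ (\<psi>' x) (\<psi> a) < \<epsilon>" using a b by simp
      then show "x \<in> T" unfolding T_def nbhd_def using a b by auto
    qed
    then have "measure \<mu>' (\<psi>' -` nbhd Z dZ B \<epsilon>1 \<inter> space \<mu>') \<le> measure \<mu>' T"
      using fm2.finite_measure_mono Ts by blast
    then show ?thesis using e1 by simp
  qed
  finally show ?thesis using T_eq by simp
qed

definition ghp_close :: "'a set \<Rightarrow> ('a \<Rightarrow> 'a \<Rightarrow> real) \<Rightarrow> 'a measure \<Rightarrow> 'a set \<Rightarrow> ('a \<Rightarrow> 'a \<Rightarrow> real) \<Rightarrow> 'a measure
   \<Rightarrow> 'z set \<Rightarrow> ('z \<Rightarrow> 'z \<Rightarrow> real) \<Rightarrow> ('a \<Rightarrow> 'z) \<Rightarrow> ('a \<Rightarrow> 'z) \<Rightarrow> real \<Rightarrow> bool" where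
  "ghp_close X d \<mu> X' d' \<mu>' Z dZ \<psi> \<psi>' \<epsilon> \<longleftrightarrow> Metric_space Z dZ \<and>
     isometric_embedding X d Z dZ \<psi> \<and> isometric_embedding X' d' Z dZ \<psi>' \<and>
     (\<forall>x\<in>X. \<exists>x'\<in>X'. dZ (\<psi> x) (\<psi>' x') < \<epsilon>) \<and>
     (\<forall>x'\<in>X'. \<exists>x\<in>X. dZ (\<psi> x) (\<psi>' x') < \<epsilon>) \<and>
     (\<forall>A\<in>sets \<mu>. measure \<mu> A \<le> measure \<mu>' {x'\<in>X'. \<exists>a\<in>A. dZ (\<psi>' x') (\<psi> a) < \<epsilon>} + \<epsilon>) \<and>
     (\<forall>A\<in>sets \<mu>'. measure \<mu>' A \<le> measure \<mu> {x\<in>X. \<exists>a\<in>A. dZ (\<psi> x) (\<psi>' a) < \<epsilon>} + \<epsilon>)"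

lemma Inf_pos_set_nonneg: "(0::ereal) \<le> Inf {ereal e | e. e > 0 \<and> P e}"
  by (rule Inf_greatest) auto

lemma ghp_witness:
  fixes X X' :: "'a set"
  assumes m1: "is_mms (X, d, \<mu>)" and m2: "is_mms (X', d', \<mu>')"
    and lt: "dGHP (X, d, \<mu>) (X', d', \<mu>') < ereal \<epsilon>"
  shows "\<exists>(Z :: ('a + 'a) set) dZ \<psi> \<psi>'. ghp_close X d \<mu> X' d' \<mu>' Z dZ \<psi> \<psi>' \<epsilon>"
proof -
  have X: "Metric_space X d" "finite_measure \<mu>" "space \<mu> = X" "sets \<mu> = sets (mborel X d)"
    using m1 unfolding is_mms_def by auto
  have X': "Metric_space X' d'" "finite_measure \<mu>'" "space \<mu>' = X'" "sets \<mu>' = sets (mborel X' d')"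
    using m2 unfolding is_mms_def by auto
  from lt obtain Z :: "('a + 'a) set" and dZ \<psi> \<psi>' where
    Z: "Metric_space Z dZ" and iso: "isometric_embedding X d Z dZ \<psi>" "isometric_embedding X' d' Z dZ \<psi>'"
    and sum: "hausdorff_dist Z dZ (\<psi> ` X) (\<psi>' ` X')
            + prokhorov_dist Z dZ (distr \<mu> (mborel Z dZ) \<psi>) (distr \<mu>' (mborel Z dZ) \<psi>') < ereal \<epsilon>"
  proof -
    have "Inf {hausdorff_dist Z dZ (\<psi> ` X) (\<psi>' ` X')
            + prokhorov_dist Z dZ (distr \<mu> (mborel Z dZ) \<psi>) (distr \<mu>' (mborel Z dZ) \<psi>')
          | (Z :: ('a + 'a) set) dZ \<psi> \<psi>'. Metric_space Z dZ \<and>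
             isometric_embedding X d Z dZ \<psi> \<and> isometric_embedding X' d' Z dZ \<psi>'} < ereal \<epsilon>"
      using lt unfolding dGHP_def by simp
    then show ?thesis unfolding Inf_less_iff using that by blast
  qed
  interpret Zm: Metric_space Z dZ by fact
  define h where "h = hausdorff_dist Z dZ (\<psi> ` X) (\<psi>' ` X')"
  define p where "p = prokhorov_dist Z dZ (distr \<mu> (mborel Z dZ) \<psi>) (distr \<mu>' (mborel Z dZ) \<psi>')"
  have h0: "h \<ge> 0" unfolding h_def hausdorff_dist_def by (rule Inf_pos_set_nonneg)
  have p0: "p \<ge> 0" unfolding p_def prokhorov_dist_def by (rule Inf_pos_set_nonneg)
  have hp: "h + p < ereal \<epsilon>" using sum h_def p_def by simp
  have hlt: "h < ereal \<epsilon>" using hp p0 by (metis add_increasing2 order.refl order.strict_trans1)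
  have plt: "p < ereal \<epsilon>" using hp h0 by (metis add_increasing order.refl order.strict_trans1)
  from hlt obtain e0 where e0: "e0 > 0" "\<psi> ` X \<subseteq> nbhd Z dZ (\<psi>' ` X') e0" "\<psi>' ` X' \<subseteq> nbhd Z dZ (\<psi> ` X) e0"
      "e0 < \<epsilon>"
    unfolding h_def hausdorff_dist_def by (auto simp: Inf_less_iff)
  from plt obtain e1 where e1: "e1 > 0" "e1 < \<epsilon>"
    and P: "\<forall>A \<in> sets (mborel Z dZ).
           measure (distr \<mu> (mborel Z dZ) \<psi>) A \<le> measure (distr \<mu>' (mborel Z dZ) \<psi>') (nbhd Z dZ A e1) + e1 \<and>
           measure (distr \<mu>' (mborel Z dZ) \<psi>') A \<le> measure (distr \<mu> (mborel Z dZ) \<psi>) (nbhd Z dZ A e1) + e1"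
    unfolding p_def prokhorov_dist_def by (auto simp: Inf_less_iff)
  have c1: "\<forall>x\<in>X. \<exists>x'\<in>X'. dZ (\<psi> x) (\<psi>' x') < \<epsilon>"
  proof
    fix x assume "x \<in> X"
    then obtain x' where "x' \<in> X'" "dZ (\<psi> x) (\<psi>' x') < e0" using e0(2) unfolding nbhd_def by auto
    then show "\<exists>x'\<in>X'. dZ (\<psi> x) (\<psi>' x') < \<epsilon>" using e0(4) by force
  qed
  have c2: "\<forall>x'\<in>X'. \<exists>x\<in>X. dZ (\<psi> x) (\<psi>' x') < \<epsilon>"
  proof
    fix x' assume "x' \<in> X'"
    then obtain x where "x \<in> X" "dZ (\<psi>' x') (\<psi> x) < e0" using e0(3) unfolding nbhd_def by auto
    then show "\<exists>x\<in>X. dZ (\<psi> x) (\<psi>' x') < \<epsilon>" using e0(4) Zm.commute by force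
  qed
  have c3: "\<forall>A\<in>sets \<mu>. measure \<mu> A \<le> measure \<mu>' {x'\<in>X'. \<exists>a\<in>A. dZ (\<psi>' x') (\<psi> a) < \<epsilon>} + \<epsilon>"
    using prok_transfer[OF Z X(1) X'(1) X(2) X'(2) X(3) X'(3) X(4) X'(4) iso e1(2)] P by blast
  have c4: "\<forall>A\<in>sets \<mu>'. measure \<mu>' A \<le> measure \<mu> {x\<in>X. \<exists>a\<in>A. dZ (\<psi> x) (\<psi>' a) < \<epsilon>} + \<epsilon>"
    using prok_transfer[OF Z X'(1) X(1) X'(2) X(2) X'(3) X(3) X'(4) X(4) iso(2) iso(1) e1(2)] P by blast
  show ?thesis unfolding ghp_close_def using Z iso c1 c2 c3 c4 by blast
qed

lemma (in Metric_space) tri3: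
  "a \<in> M \<Longrightarrow> b \<in> M \<Longrightarrow> c \<in> M \<Longrightarrow> e \<in> M \<Longrightarrow> d a e \<le> d a b + d b c + d c e"
  by (meson add_mono order.refl order_trans triangle)

lemma mms_parts:
  assumes "is_mms (X, d, \<mu>)"
  shows "Metric_space X d" "finite_measure \<mu>" "space \<mu> = X" "sets \<mu> = sets (mborel X d)"
    "compact_space (Metric_space.mtopology X d)"
  using assms unfolding is_mms_def by auto

lemma open_in_sets:
  assumes "is_mms (X, d, \<mu>)" "openin (Metric_space.mtopology X d) U"
  shows "U \<in> sets \<mu>"
  using open_in_mborel[OF mms_parts(1)[OF assms(1)] assms(2)] mms_parts(4)[OF assms(1)] by simp

lemma construct:
  fixes X Y Xn Yn :: "'a set"
  assumes mX: "is_mms (X, d, \<mu>)" and mY: "is_mms (Y, e, \<nu>)"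
    and mXn: "is_mms (Xn, dn, \<mu>n)" and mYn: "is_mms (Yn, en, \<nu>n)"
    and c1: "ghp_close Xn dn \<mu>n X d \<mu> Z dZ \<psi> \<kappa> \<epsilon>"
    and c2: "ghp_close Yn en \<nu>n Y e \<nu> Z' dZ' \<alpha> \<beta> \<epsilon>"
    and le: "mms_le (Xn, dn, \<mu>n) (Yn, en, \<nu>n)"
  shows "\<exists>f. f \<in> Y \<rightarrow> X \<and> (\<forall>y\<in>Y. \<forall>y'\<in>Y. d (f y) (f y') \<le> e y y' + 4 * \<epsilon>)
     \<and> (\<forall>x\<in>X. \<exists>y\<in>Y. d x (f y) \<le> 4 * \<epsilon>)
     \<and> (\<forall>F. closedin (Metric_space.mtopology X d) F \<longrightarrow>
           (\<exists>K\<in>sets \<nu>. K \<subseteq> {y\<in>Y. \<exists>a\<in>F. d (f y) a < 4 * \<epsilon>} \<and> measure \<mu> F \<le> measure \<nu> K + 2 * \<epsilon>))"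
proof -
  note X = mms_parts[OF mX] and Y = mms_parts[OF mY] and Xn = mms_parts[OF mXn] and Yn = mms_parts[OF mYn]
  interpret Xm: Metric_space X d by fact
  interpret Ym: Metric_space Y e by fact
  interpret Xnm: Metric_space Xn dn by fact
  interpret Ynm: Metric_space Yn en by fact
  have Z: "Metric_space Z dZ" and isoP: "isometric_embedding Xn dn Z dZ \<psi>" and isoC: "isometric_embedding X d Z dZ \<kappa>"
    and c1a: "\<forall>x\<in>Xn. \<exists>x'\<in>X. dZ (\<psi> x) (\<kappa> x') < \<epsilon>"
    and c1b: "\<forall>x'\<in>X. \<exists>x\<in>Xn. dZ (\<psi> x) (\<kappa> x') < \<epsilon>"
    and c1m: "\<forall>A\<in>sets \<mu>. measure \<mu> A \<le> measure \<mu>n {x\<in>Xn. \<exists>a\<in>A. dZ (\<psi> x) (\<kappa> a) < \<epsilon>} + \<epsilon>"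
    using c1 unfolding ghp_close_def by auto
  have Z': "Metric_space Z' dZ'" and isoA: "isometric_embedding Yn en Z' dZ' \<alpha>" and isoB: "isometric_embedding Y e Z' dZ' \<beta>"
    and c2a: "\<forall>x\<in>Yn. \<exists>x'\<in>Y. dZ' (\<alpha> x) (\<beta> x') < \<epsilon>"
    and c2b: "\<forall>x'\<in>Y. \<exists>x\<in>Yn. dZ' (\<alpha> x) (\<beta> x') < \<epsilon>"
    and c2m: "\<forall>A\<in>sets \<nu>n. measure \<nu>n A \<le> measure \<nu> {x'\<in>Y. \<exists>a\<in>A. dZ' (\<beta> x') (\<alpha> a) < \<epsilon>} + \<epsilon>"
    using c2 unfolding ghp_close_def by auto
  interpret Zm: Metric_space Z dZ by fact
  interpret Z'm: Metric_space Z' dZ' by fact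
  have P: "\<psi> x \<in> Z" "\<And>y. y \<in> Xn \<Longrightarrow> dZ (\<psi> x) (\<psi> y) = dn x y" if "x \<in> Xn" for x
    using isoP that unfolding isometric_embedding_def by auto
  have C: "\<kappa> x \<in> Z" "\<And>y. y \<in> X \<Longrightarrow> dZ (\<kappa> x) (\<kappa> y) = d x y" if "x \<in> X" for x
    using isoC that unfolding isometric_embedding_def by auto
  have A: "\<alpha> x \<in> Z'" "\<And>y. y \<in> Yn \<Longrightarrow> dZ' (\<alpha> x) (\<alpha> y) = en x y" if "x \<in> Yn" for x
    using isoA that unfolding isometric_embedding_def by auto
  have B: "\<beta> x \<in> Z'" "\<And>y. y \<in> Y \<Longrightarrow> dZ' (\<beta> x) (\<beta> y) = e x y" if "x \<in> Y" for x
    using isoB that unfolding isometric_embedding_def by auto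
  from le obtain \<phi> where phi_onto: "\<phi> ` Yn = Xn" and phi_lip: "\<forall>x\<in>Yn. \<forall>y\<in>Yn. dn (\<phi> x) (\<phi> y) \<le> en x y"
    and phi_meas: "\<forall>A\<in>sets \<mu>n. emeasure \<mu>n A \<le> emeasure \<nu>n (\<phi> -` A \<inter> Yn)"
    unfolding mms_le_def by auto
  have phiX: "\<phi> y \<in> Xn" if "y \<in> Yn" for y using phi_onto that by auto
  define y1 where "y1 y = (SOME y1. y1 \<in> Yn \<and> dZ' (\<alpha> y1) (\<beta> y) < \<epsilon>)" for y
  have y1: "y1 y \<in> Yn" "dZ' (\<alpha> (y1 y)) (\<beta> y) < \<epsilon>" if "y \<in> Y" for y
  proof -
    have "\<exists>y1. y1 \<in> Yn \<and> dZ' (\<alpha> y1) (\<beta> y) < \<epsilon>" using c2b that by blast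
    from someI_ex[OF this] show "y1 y \<in> Yn" "dZ' (\<alpha> (y1 y)) (\<beta> y) < \<epsilon>" unfolding y1_def by auto
  qed
  define f where "f y = (SOME x. x \<in> X \<and> dZ (\<psi> (\<phi> (y1 y))) (\<kappa> x) < \<epsilon>)" for y
  have f: "f y \<in> X" "dZ (\<psi> (\<phi> (y1 y))) (\<kappa> (f y)) < \<epsilon>" if "y \<in> Y" for y
  proof -
    have "\<exists>x. x \<in> X \<and> dZ (\<psi> (\<phi> (y1 y))) (\<kappa> x) < \<epsilon>" using c1a phiX y1 that by blast
    from someI_ex[OF this] show "f y \<in> X" "dZ (\<psi> (\<phi> (y1 y))) (\<kappa> (f y)) < \<epsilon>" unfolding f_def by auto
  qed
  have key: "d (f y) a < \<epsilon> + en (y1 y) b + \<epsilon>"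
    if y: "y \<in> Y" and a: "a \<in> X" and b: "b \<in> Yn" and h: "dZ (\<psi> (\<phi> b)) (\<kappa> a) < \<epsilon>" for y a b
  proof -
    have e1: "d (f y) a = dZ (\<kappa> (f y)) (\<kappa> a)" using C f y a by simp
    have e2: "dZ (\<kappa> (f y)) (\<kappa> a) \<le> dZ (\<kappa> (f y)) (\<psi> (\<phi> (y1 y))) + dZ (\<psi> (\<phi> (y1 y))) (\<psi> (\<phi> b)) + dZ (\<psi> (\<phi> b)) (\<kappa> a)"
      by (rule Zm.tri3) (use C P f y a b phiX y1 in auto)
    have e3: "dZ (\<psi> (\<phi> (y1 y))) (\<psi> (\<phi> b)) = dn (\<phi> (y1 y)) (\<phi> b)" using P phiX y1 y b by simp
    have e4: "dn (\<phi> (y1 y)) (\<phi> b) \<le> en (y1 y) b" using phi_lip y1 y b by simp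
    have e5: "dZ (\<kappa> (f y)) (\<psi> (\<phi> (y1 y))) < \<epsilon>" using f(2)[OF y] Zm.commute by metis
    show ?thesis using e1 e2 e3 e4 e5 h by linarith
  qed
  have ynest: "en (y1 y) b < \<epsilon> + r + \<epsilon>"
    if y: "y \<in> Y" and b: "b \<in> Yn" and w: "w \<in> Y" and h: "dZ' (\<beta> w) (\<alpha> b) < \<epsilon>" and r: "e y w \<le> r" for y b w r
  proof -
    have e1: "en (y1 y) b = dZ' (\<alpha> (y1 y)) (\<alpha> b)" using A y1 y b by simp
    have e2: "dZ' (\<alpha> (y1 y)) (\<alpha> b) \<le> dZ' (\<alpha> (y1 y)) (\<beta> y) + dZ' (\<beta> y) (\<beta> w) + dZ' (\<beta> w) (\<alpha> b)"
      by (rule Z'm.tri3) (use A B y1 y b w in auto)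
    have e3: "dZ' (\<beta> y) (\<beta> w) = e y w" using B y w by simp
    show ?thesis using e1 e2 e3 y1(2)[OF y] h r by linarith
  qed
  have fY: "f \<in> Y \<rightarrow> X" using f by auto
  have lip: "\<forall>y\<in>Y. \<forall>y'\<in>Y. d (f y) (f y') \<le> e y y' + 4 * \<epsilon>"
  proof (intro ballI)
    fix y y' assume y: "y \<in> Y" and y': "y' \<in> Y"
    have "en (y1 y) (y1 y') < \<epsilon> + e y y' + \<epsilon>"
      using ynest[OF y y1(1)[OF y'] y' _ order.refl] y1(2)[OF y'] Z'm.commute by metis
    moreover have "d (f y) (f y') < \<epsilon> + en (y1 y) (y1 y') + \<epsilon>"
      using key[OF y f(1)[OF y'] y1(1)[OF y']] f(2)[OF y'] by simp
    ultimately show "d (f y) (f y') \<le> e y y' + 4 * \<epsilon>" by linarith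
  qed
  have surj: "\<forall>x\<in>X. \<exists>y\<in>Y. d x (f y) \<le> 4 * \<epsilon>"
  proof
    fix x assume x: "x \<in> X"
    obtain x1 where x1: "x1 \<in> Xn" "dZ (\<psi> x1) (\<kappa> x) < \<epsilon>" using c1b x by blast
    obtain b where b: "b \<in> Yn" "\<phi> b = x1" using phi_onto x1 by blast
    obtain y where y: "y \<in> Y" "dZ' (\<alpha> b) (\<beta> y) < \<epsilon>" using c2a b by blast
    have "en (y1 y) b < \<epsilon> + 0 + \<epsilon>"
      using ynest[OF y(1) b(1) y(1) _] y(2) Z'm.commute Ym.zero y(1) by (metis order.refl)
    then have "d (f y) x < \<epsilon> + (\<epsilon> + 0 + \<epsilon>) + \<epsilon>"
      using key[OF y(1) x b(1)] x1 b by simp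
    moreover have "d x (f y) = d (f y) x" by (rule Xm.commute)
    ultimately show "\<exists>y\<in>Y. d x (f y) \<le> 4 * \<epsilon>" using y(1) by force
  qed
  have meas: "\<exists>K\<in>sets \<nu>. K \<subseteq> {y\<in>Y. \<exists>a\<in>F. d (f y) a < 4 * \<epsilon>} \<and> measure \<mu> F \<le> measure \<nu> K + 2 * \<epsilon>"
    if F: "closedin (Metric_space.mtopology X d) F" for F
  proof -
    have FX: "F \<subseteq> X" using closedin_subset[OF F] by simp
    have Fs: "F \<in> sets \<mu>"
    proof -
      have "X - F \<in> sets \<mu>" using F unfolding closedin_def by (intro open_in_sets[OF mX]) simp
      then have "space \<mu> - (X - F) \<in> sets \<mu>" by blast
      then show ?thesis using FX X(3) by (simp add: Diff_Diff_Int inf.absorb2)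
    qed
    define G where "G = {x\<in>Xn. \<exists>a\<in>F. dZ (\<psi> x) (\<kappa> a) < \<epsilon>}"
    have CF: "\<kappa> ` F \<subseteq> Z" using C FX by auto
    have G_eq: "G = {x\<in>Xn. \<psi> x \<in> nbhd Z dZ (\<kappa> ` F) \<epsilon>}" unfolding G_def nbhd_def using P by auto
    have Gs: "G \<in> sets \<mu>n" unfolding G_eq
      by (rule open_in_sets[OF mXn lip_preimage_open[OF Xn(1) Z iso_lip(2)[OF isoP] iso_lip(1)[OF isoP] nbhd_open[OF Z CF]]])
    have Gopen: "openin (Metric_space.mtopology Xn dn) G" unfolding G_eq
      by (rule lip_preimage_open[OF Xn(1) Z iso_lip(2)[OF isoP] iso_lip(1)[OF isoP] nbhd_open[OF Z CF]])
    define H where "H = \<phi> -` G \<inter> Yn"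
    have H_eq: "H = {y\<in>Yn. \<phi> y \<in> G}" unfolding H_def by auto
    have Hopen: "openin (Metric_space.mtopology Yn en) H" unfolding H_eq
      by (rule lip_preimage_open[OF Yn(1) Xn(1) _ phi_lip Gopen]) (use phiX in auto)
    have Hs: "H \<in> sets \<nu>n" by (rule open_in_sets[OF mYn Hopen])
    define K where "K = {y\<in>Y. \<exists>a\<in>H. dZ' (\<beta> y) (\<alpha> a) < \<epsilon>}"
    have AH: "\<alpha> ` H \<subseteq> Z'" using A H_def by auto
    have K_eq: "K = {y\<in>Y. \<beta> y \<in> nbhd Z' dZ' (\<alpha> ` H) \<epsilon>}" unfolding K_def nbhd_def using B by auto
    have Ks: "K \<in> sets \<nu>" unfolding K_eq
      by (rule open_in_sets[OF mY lip_preimage_open[OF Y(1) Z' iso_lip(2)[OF isoB] iso_lip(1)[OF isoB] nbhd_open[OF Z' AH]]])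
    have "measure \<mu> F \<le> measure \<mu>n G + \<epsilon>" using c1m Fs G_def by simp
    also have "measure \<mu>n G \<le> measure \<nu>n H"
    proof -
      interpret f1: finite_measure \<mu>n by (rule Xn(2))
      interpret f2: finite_measure \<nu>n by (rule Yn(2))
      have "emeasure \<mu>n G \<le> emeasure \<nu>n H" using phi_meas Gs H_def by simp
      then show ?thesis by (simp add: f1.emeasure_eq_measure f2.emeasure_eq_measure)
    qed
    also have "measure \<nu>n H \<le> measure \<nu> K + \<epsilon>" using c2m Hs K_def by simp
    finally have m: "measure \<mu> F \<le> measure \<nu> K + 2 * \<epsilon>" by simp
    have sub: "K \<subseteq> {y\<in>Y. \<exists>a\<in>F. d (f y) a < 4 * \<epsilon>}"
    proof
      fix y assume "y \<in> K"
      then obtain b where y: "y \<in> Y" and b: "b \<in> Yn" "\<phi> b \<in> G" "dZ' (\<beta> y) (\<alpha> b) < \<epsilon>"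
        unfolding K_def H_def by auto
      then obtain a where a: "a \<in> F" "dZ (\<psi> (\<phi> b)) (\<kappa> a) < \<epsilon>" unfolding G_def by auto
      have "en (y1 y) b < \<epsilon> + 0 + \<epsilon>"
        using ynest[OF y b(1) y b(3), of 0] Ym.zero y by simp
      then have "d (f y) a < 4 * \<epsilon>" using key[OF y _ b(1) a(2)] a(1) FX by force
      then show "y \<in> {y\<in>Y. \<exists>a\<in>F. d (f y) a < 4 * \<epsilon>}" using y a by auto
    qed
    show ?thesis using Ks sub m by blast
  qed
  show ?thesis using fY lip surj meas by blast
qed

lemma nbhd_mono: "r \<le> s \<Longrightarrow> nbhd Z dZ S r \<subseteq> nbhd Z dZ S s"
  unfolding nbhd_def by force

lemma closed_in_sets:
  assumes m: "is_mms (X, d, \<mu>)" and F: "closedin (Metric_space.mtopology X d) F"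
  shows "F \<in> sets \<mu>"
proof -
  note X = mms_parts[OF m]
  have FX: "F \<subseteq> X" using closedin_subset[OF F] Metric_space.topspace_mtopology[OF X(1)] by simp
  have "X - F \<in> sets \<mu>" using F unfolding closedin_def
    by (intro open_in_sets[OF m]) (simp add: Metric_space.topspace_mtopology[OF X(1)])
  then have "space \<mu> - (X - F) \<in> sets \<mu>" by blast
  then show ?thesis using FX X(3) by (simp add: Diff_Diff_Int inf.absorb2)
qed

lemma inner_reg:
  assumes m: "is_mms (X, d, \<mu>)" and A: "A \<in> sets \<mu>" and dpos: "\<delta> > 0"
  shows "\<exists>F. closedin (Metric_space.mtopology X d) F \<and> F \<subseteq> A \<and> measure \<mu> A \<le> measure \<mu> F + \<delta>"
proof -
  note X = mms_parts[OF m]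
  interpret Xm: Metric_space X d by (rule X(1))
  interpret fm: finite_measure \<mu> by (rule X(2))
  define G where "G = {A. A \<subseteq> X \<and> (\<forall>\<delta>>0. \<exists>F U. closedin Xm.mtopology F \<and> openin Xm.mtopology U \<and>
      F \<subseteq> A \<and> A \<subseteq> U \<and> measure \<mu> U \<le> measure \<mu> F + \<delta>)}"
  have os: "U \<in> sets \<mu>" if "openin Xm.mtopology U" for U using open_in_sets[OF m that] .
  have cs: "F \<in> sets \<mu>" if "closedin Xm.mtopology F" for F using closed_in_sets[OF m that] .
  have "A \<in> sigma_sets X {U. openin Xm.mtopology U}" using A X(4) sets_mborel[OF X(1)] by simp
  then have "A \<in> G"
  proof (induction rule: sigma_sets.induct)
    case (Basic U)
    then have U: "openin Xm.mtopology U" by simp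
    have UX: "U \<subseteq> X" using openin_subset[OF U] by simp
    define F where "F k = X - nbhd X d (X - U) (inverse (real (Suc k)))" for k
    have Fc: "closedin Xm.mtopology (F k)" for k
    proof -
      have e: "X - F k = nbhd X d (X - U) (inverse (real (Suc k)))" unfolding F_def nbhd_def by blast
      have "openin Xm.mtopology (X - F k)" unfolding e by (rule nbhd_open[OF X(1)]) blast
      moreover have "F k \<subseteq> X" unfolding F_def by blast
      ultimately show ?thesis unfolding closedin_def by simp
    qed
    have FU: "F k \<subseteq> U" for k
    proof
      fix x assume x: "x \<in> F k"
      show "x \<in> U"
      proof (rule ccontr)
        assume "x \<notin> U"
        then have "x \<in> nbhd X d (X - U) (inverse (real (Suc k)))" using x unfolding F_def nbhd_def
          by (intro CollectI conjI bexI[of _ x]) auto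
        then show False using x unfolding F_def by auto
      qed
    qed
    have inc: "incseq F" unfolding incseq_def
    proof (intro allI impI)
      fix m n :: nat assume "m \<le> n"
      then have "inverse (real (Suc n)) \<le> inverse (real (Suc m))" by (intro le_imp_inverse_le) auto
      from nbhd_mono[OF this, of X d "X - U"] show "F m \<subseteq> F n" unfolding F_def by blast
    qed
    have UF: "(\<Union>k. F k) = U"
    proof
      show "(\<Union>k. F k) \<subseteq> U" using FU by auto
      show "U \<subseteq> (\<Union>k. F k)"
      proof
        fix x assume x: "x \<in> U"
        then obtain r where r: "r > 0" "Xm.mball x r \<subseteq> U" using U Xm.openin_mtopology by blast
        obtain k where k: "inverse (real (Suc k)) < r" using reals_Archimedean[OF r(1)] by blast
        have "x \<notin> nbhd X d (X - U) (inverse (real (Suc k)))"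
        proof
          assume "x \<in> nbhd X d (X - U) (inverse (real (Suc k)))"
          then obtain a where a: "a \<in> X" "a \<notin> U" "d x a < inverse (real (Suc k))" unfolding nbhd_def by auto
          then have "a \<in> Xm.mball x r" using k x UX by auto
          then show False using r a by auto
        qed
        then show "x \<in> (\<Union>k. F k)" using x UX unfolding F_def by auto
      qed
    qed
    have lim: "(\<lambda>k. measure \<mu> (F k)) \<longlonglongrightarrow> measure \<mu> U"
      using fm.finite_Lim_measure_incseq[of F] inc cs Fc UF by auto
    show ?case unfolding G_def
    proof (intro CollectI conjI allI impI UX)
      fix \<delta> :: real assume "\<delta> > 0"
      then have "measure \<mu> U - \<delta> < measure \<mu> U" by simp
      from order_tendstoD(1)[OF lim this] obtain k where "measure \<mu> U - \<delta> < measure \<mu> (F k)"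
        by (auto simp: eventually_sequentially)
      then show "\<exists>F U'. closedin Xm.mtopology F \<and> openin Xm.mtopology U' \<and> F \<subseteq> U \<and> U \<subseteq> U' \<and>
          measure \<mu> U' \<le> measure \<mu> F + \<delta>"
        using Fc FU U by (intro exI[of _ "F k"] exI[of _ U]) auto
    qed
  next
    case Empty
    show ?case unfolding G_def by (auto intro!: exI[of _ "{}"])
  next
    case (Compl a)
    have aX: "a \<subseteq> X" using Compl.IH unfolding G_def by auto
    show ?case unfolding G_def
    proof (intro CollectI conjI allI impI)
      show "X - a \<subseteq> X" by auto
      fix \<delta> :: real assume "\<delta> > 0"
      then obtain F U where FU: "closedin Xm.mtopology F" "openin Xm.mtopology U" "F \<subseteq> a" "a \<subseteq> U"
        "measure \<mu> U \<le> measure \<mu> F + \<delta>" using Compl.IH unfolding G_def by blast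
      have UX: "U \<subseteq> X" using openin_subset[OF FU(2)] by simp
      have c1: "closedin Xm.mtopology (X - U)" unfolding closedin_def using FU(2) UX
        by (simp add: Diff_Diff_Int inf.absorb2)
      have o1: "openin Xm.mtopology (X - F)" using FU(1) unfolding closedin_def by simp
      have "measure \<mu> (X - F) = measure \<mu> X - measure \<mu> F" using fm.finite_measure_compl[OF cs[OF FU(1)]] X(3) by simp
      moreover have "measure \<mu> (X - U) = measure \<mu> X - measure \<mu> U" using fm.finite_measure_compl[OF os[OF FU(2)]] X(3) by simp
      ultimately have "measure \<mu> (X - F) \<le> measure \<mu> (X - U) + \<delta>" using FU(5) by simp
      then show "\<exists>F U. closedin Xm.mtopology F \<and> openin Xm.mtopology U \<and> F \<subseteq> X - a \<and> X - a \<subseteq> U \<and>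
          measure \<mu> U \<le> measure \<mu> F + \<delta>"
        using c1 o1 FU(3,4) by (intro exI[of _ "X - U"] exI[of _ "X - F"]) auto
    qed
  next
    case (Union a)
    have aX: "a i \<subseteq> X" for i using Union.IH unfolding G_def by auto
    show ?case unfolding G_def
    proof (intro CollectI conjI allI impI)
      show "(\<Union>i. a i) \<subseteq> X" using aX by auto
      fix \<delta> :: real assume dp: "\<delta> > 0"
      define c where "c i = \<delta> / 4 * (1/2) ^ i" for i
      have cpos: "c i > 0" for i using dp unfolding c_def by simp
      have "\<forall>i. \<exists>F U. closedin Xm.mtopology F \<and> openin Xm.mtopology U \<and> F \<subseteq> a i \<and> a i \<subseteq> U \<and>
          measure \<mu> U \<le> measure \<mu> F + c i"
        using Union.IH cpos unfolding G_def by blast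
      then obtain F U where FU: "\<And>i. closedin Xm.mtopology (F i)" "\<And>i. openin Xm.mtopology (U i)"
        "\<And>i. F i \<subseteq> a i" "\<And>i. a i \<subseteq> U i" "\<And>i. measure \<mu> (U i) \<le> measure \<mu> (F i) + c i"
        by metis
      have Fs: "F i \<in> sets \<mu>" for i using cs FU(1) by blast
      have Us: "U i \<in> sets \<mu>" for i using os FU(2) by blast
      have csum: "summable c" "suminf c = \<delta> / 2"
      proof -
        have "summable (\<lambda>i. (1/2::real) ^ i)" by (rule summable_geometric) simp
        then show "summable c" unfolding c_def by (rule summable_mult)
        have "suminf (\<lambda>i. (1/2::real) ^ i) = 2" using suminf_geometric[of "1/2::real"] by simp
        then show "suminf c = \<delta> / 2" unfolding c_def
          using suminf_mult[OF \<open>summable (\<lambda>i. (1/2::real) ^ i)\<close>, of "\<delta>/4"] by simp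
      qed
      define D where "D i = U i - F i" for i
      have Ds: "D i \<in> sets \<mu>" for i unfolding D_def using Fs Us by blast
      have Dm: "measure \<mu> (D i) \<le> c i" for i
      proof -
        have "F i \<subseteq> U i" using FU(3)[of i] FU(4)[of i] by blast
        then show ?thesis unfolding D_def using fm.finite_measure_Diff[OF Us[of i] Fs[of i]] FU(5)[of i] by simp
      qed
      have Dsum: "summable (\<lambda>i. measure \<mu> (D i))"
        by (rule summable_comparison_test[OF _ csum(1)]) (use Dm in auto)
      have "measure \<mu> (\<Union>i. D i) \<le> (\<Sum>i. measure \<mu> (D i))"
        by (rule fm.finite_measure_subadditive_countably) (use Ds Dsum in auto)
      also have "\<dots> \<le> suminf c" by (rule suminf_le[OF Dm Dsum csum(1)])
      finally have D2: "measure \<mu> (\<Union>i. D i) \<le> \<delta> / 2" using csum by simp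
      define FF where "FF N = (\<Union>i<N. F i)" for N
      have FFs: "FF N \<in> sets \<mu>" for N unfolding FF_def using Fs by blast
      have FFinc: "incseq FF" unfolding incseq_def FF_def by (auto intro: order.strict_trans2)
      have FFU: "(\<Union>N. FF N) = (\<Union>i. F i)" unfolding FF_def by auto
      have lim: "(\<lambda>N. measure \<mu> (FF N)) \<longlonglongrightarrow> measure \<mu> (\<Union>i. F i)"
        using fm.finite_Lim_measure_incseq[of FF] FFinc FFs FFU by auto
      have "measure \<mu> (\<Union>i. F i) - \<delta> / 2 < measure \<mu> (\<Union>i. F i)" using dp by simp
      from order_tendstoD(1)[OF lim this] obtain N where N: "measure \<mu> (\<Union>i. F i) - \<delta> / 2 < measure \<mu> (FF N)"
        by (auto simp: eventually_sequentially)
      have UU: "(\<Union>i. U i) \<subseteq> (\<Union>i. F i) \<union> (\<Union>i. D i)" unfolding D_def by auto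
      have "measure \<mu> (\<Union>i. U i) \<le> measure \<mu> ((\<Union>i. F i) \<union> (\<Union>i. D i))"
        by (rule fm.finite_measure_mono[OF UU]) (use Fs Ds in auto)
      also have "\<dots> \<le> measure \<mu> (\<Union>i. F i) + measure \<mu> (\<Union>i. D i)"
        by (rule measure_Un_le) (use Fs Ds in auto)
      finally have m: "measure \<mu> (\<Union>i. U i) \<le> measure \<mu> (FF N) + \<delta>" using D2 N by linarith
      have c: "closedin Xm.mtopology (FF N)" unfolding FF_def
        by (rule closedin_Union) (use FU(1) in auto)
      have o: "openin Xm.mtopology (\<Union>i. U i)" using FU(2) by auto
      show "\<exists>F U. closedin Xm.mtopology F \<and> openin Xm.mtopology U \<and> F \<subseteq> (\<Union>i. a i) \<and> (\<Union>i. a i) \<subseteq> U \<and>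
          measure \<mu> U \<le> measure \<mu> F + \<delta>"
      proof -
        have "FF N \<subseteq> (\<Union>i. a i)" unfolding FF_def using FU(3) by blast
        moreover have "(\<Union>i. a i) \<subseteq> (\<Union>i. U i)" using FU(4) by blast
        ultimately show ?thesis using c o m by blast
      qed
    qed
  qed
  then obtain F U where FU: "closedin Xm.mtopology F" "openin Xm.mtopology U" "F \<subseteq> A" "A \<subseteq> U"
    "measure \<mu> U \<le> measure \<mu> F + \<delta>" using dpos unfolding G_def by blast
  have "measure \<mu> A \<le> measure \<mu> U" using fm.finite_measure_mono[OF FU(4) os[OF FU(2)]] .
  then show ?thesis using FU by force
qed

lemma cluster_point:
  fixes s :: "nat \<Rightarrow> 'a"
  assumes cpt: "compact_space T" and s: "\<And>n. s n \<in> topspace T"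
  shows "\<exists>p\<in>topspace T. \<forall>U. openin T U \<and> p \<in> U \<longrightarrow> (\<forall>N. \<exists>n\<ge>N. s n \<in> U)"
proof (rule ccontr)
  assume a: "\<not> ?thesis"
  have H: "\<exists>U. openin T U \<and> p \<in> U \<and> (\<exists>N. \<forall>n\<ge>N. s n \<notin> U)" if p: "p \<in> topspace T" for p
  proof -
    from a p obtain U where "openin T U \<and> p \<in> U" "\<not> (\<forall>N. \<exists>n\<ge>N. s n \<in> U)" by blast
    then show ?thesis by blast
  qed
  define \<U> where "\<U> = {U. openin T U \<and> (\<exists>N. \<forall>n\<ge>N. s n \<notin> U)}"
  have o: "\<forall>U\<in>\<U>. openin T U" unfolding \<U>_def by blast
  have c: "topspace T \<subseteq> \<Union>\<U>"
  proof
    fix p assume "p \<in> topspace T"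
    from H[OF this] obtain U where "openin T U" "p \<in> U" "\<exists>N. \<forall>n\<ge>N. s n \<notin> U" by blast
    then show "p \<in> \<Union>\<U>" unfolding \<U>_def by blast
  qed
  from cpt[unfolded compact_space_alt, rule_format, OF conjI[OF o c]]
  obtain \<F> where F: "finite \<F>" "\<F> \<subseteq> \<U>" "topspace T \<subseteq> \<Union>\<F>" by blast
  have "\<forall>U\<in>\<F>. eventually (\<lambda>n. s n \<notin> U) sequentially"
  proof
    fix U assume "U \<in> \<F>"
    then have "\<exists>N. \<forall>n\<ge>N. s n \<notin> U" using F(2) unfolding \<U>_def by blast
    then show "eventually (\<lambda>n. s n \<notin> U) sequentially" unfolding eventually_sequentially .
  qed
  then have "eventually (\<lambda>n. \<forall>U\<in>\<F>. s n \<notin> U) sequentially"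
    by (rule eventually_ball_finite[OF F(1)])
  then obtain N where "\<forall>U\<in>\<F>. s N \<notin> U" unfolding eventually_sequentially by blast
  then show False using F(3) s[of N] by blast
qed

lemma product_nbhd_open:
  assumes X: "Metric_space X d" and P: "finite P" "P \<subseteq> Y" and g0: "g0 \<in> (\<Pi>\<^sub>E y\<in>Y. X)"
  shows "openin (product_topology (\<lambda>_. Metric_space.mtopology X d) Y)
           {g \<in> (\<Pi>\<^sub>E y\<in>Y. X). \<forall>q\<in>P. d (g q) (g0 q) < \<delta>}"
proof -
  interpret Xm: Metric_space X d by fact
  define T where "T = product_topology (\<lambda>_. Xm.mtopology) Y"
  have tT: "topspace T = (\<Pi>\<^sub>E y\<in>Y. X)" unfolding T_def by simp
  define U where "U q = {g \<in> topspace T. g q \<in> Xm.mball (g0 q) \<delta>}" for q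
  have Uo: "openin T (U q)" if "q \<in> P" for q
    unfolding U_def T_def
    by (rule openin_continuous_map_preimage[OF continuous_map_product_projection]) (use that P in auto)
  have "openin T ((\<Inter>q\<in>P. U q) \<inter> topspace T)" by (rule openin_INT[OF P(1) Uo])
  moreover have "(\<Inter>q\<in>P. U q) \<inter> topspace T = {g \<in> (\<Pi>\<^sub>E y\<in>Y. X). \<forall>q\<in>P. d (g q) (g0 q) < \<delta>}"
  proof (rule set_eqI)
    fix g
    show "g \<in> (\<Inter>q\<in>P. U q) \<inter> topspace T \<longleftrightarrow> g \<in> {g \<in> (\<Pi>\<^sub>E y\<in>Y. X). \<forall>q\<in>P. d (g q) (g0 q) < \<delta>}"
    proof (cases "g \<in> (\<Pi>\<^sub>E y\<in>Y. X)")
      case True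
      have "g q \<in> X \<and> g0 q \<in> X" if "q \<in> P" for q using True g0 P that by (auto simp: PiE_iff)
      then have "(\<forall>q\<in>P. g q \<in> Xm.mball (g0 q) \<delta>) \<longleftrightarrow> (\<forall>q\<in>P. d (g q) (g0 q) < \<delta>)"
        using Xm.commute by (simp add: Xm.in_mball)
      then show ?thesis using True unfolding U_def tT by blast
    next
      case False
      then show ?thesis unfolding U_def tT by blast
    qed
  qed
  ultimately show ?thesis unfolding T_def by simp
qed


lemma core:
  fixes X Y :: "'a set" and \<epsilon> :: "nat \<Rightarrow> real" and f :: "nat \<Rightarrow> 'a \<Rightarrow> 'a"
  assumes mX: "is_mms (X, d, \<mu>)" and mY: "is_mms (Y, e, \<nu>)"
    and epos: "\<And>k. \<epsilon> k > 0" and elim: "\<epsilon> \<longlonglongrightarrow> 0"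
    and fY: "\<And>k. f k \<in> Y \<rightarrow> X"
    and flip: "\<And>k. \<forall>y\<in>Y. \<forall>y'\<in>Y. d (f k y) (f k y') \<le> e y y' + 4 * \<epsilon> k"
    and fsurj: "\<And>k. \<forall>x\<in>X. \<exists>y\<in>Y. d x (f k y) \<le> 4 * \<epsilon> k"
    and fmeas: "\<And>k. \<forall>F. closedin (Metric_space.mtopology X d) F \<longrightarrow>
           (\<exists>K\<in>sets \<nu>. K \<subseteq> {y\<in>Y. \<exists>a\<in>F. d (f k y) a < 4 * \<epsilon> k} \<and> measure \<mu> F \<le> measure \<nu> K + 2 * \<epsilon> k)"
  shows "mms_le (X, d, \<mu>) (Y, e, \<nu>)"
proof -
  note X = mms_parts[OF mX] and Y = mms_parts[OF mY]
  interpret Xm: Metric_space X d by (rule X(1))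
  interpret Ym: Metric_space Y e by (rule Y(1))
  interpret fX: finite_measure \<mu> by (rule X(2))
  interpret fY: finite_measure \<nu> by (rule Y(2))
  define T where "T = product_topology (\<lambda>_. Xm.mtopology) Y"
  have tT: "topspace T = (\<Pi>\<^sub>E y\<in>Y. X)" unfolding T_def by simp
  have cT: "compact_space T" unfolding T_def compact_space_product_topology
    by (rule disjI2) (use X(5) in simp)
  define g where "g k = restrict (f k) Y" for k
  have gT: "g k \<in> topspace T" for k unfolding tT g_def using fY[of k] by (simp add: restrict_PiE_iff Pi_iff)
  obtain \<phi> where phiT: "\<phi> \<in> topspace T"
    and clus: "\<And>U. openin T U \<Longrightarrow> \<phi> \<in> U \<Longrightarrow> \<forall>N. \<exists>n\<ge>N. g n \<in> U"
    using cluster_point[of T g, OF cT gT] by blast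
  have phiX: "\<phi> y \<in> X" if "y \<in> Y" for y using phiT that unfolding tT by auto
  have phiE: "\<phi> \<in> (\<Pi>\<^sub>E y\<in>Y. X)" using phiT tT by simp
  have freq: "\<And>P N \<delta>. finite P \<Longrightarrow> P \<subseteq> Y \<Longrightarrow> \<delta> > 0 \<Longrightarrow> \<exists>n\<ge>N. \<forall>q\<in>P. d (f n q) (\<phi> q) < \<delta>"
  proof -
    fix P N and \<delta> :: real assume P: "finite P" "P \<subseteq> Y" and dp: "\<delta> > 0"
    define U where "U = {h \<in> (\<Pi>\<^sub>E y\<in>Y. X). \<forall>q\<in>P. d (h q) (\<phi> q) < \<delta>}"
    have "openin T U" unfolding U_def T_def by (rule product_nbhd_open[OF X(1) P phiE])
    moreover have "\<phi> \<in> U" unfolding U_def using phiE phiX P dp by auto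
    ultimately obtain n where n: "n \<ge> N" "g n \<in> U" using clus by blast
    have "\<forall>q\<in>P. d (f n q) (\<phi> q) < \<delta>"
    proof
      fix q assume q: "q \<in> P"
      then have "q \<in> Y" using P(2) by blast
      moreover have "d (g n q) (\<phi> q) < \<delta>" using n(2) q unfolding U_def by blast
      ultimately show "d (f n q) (\<phi> q) < \<delta>" unfolding g_def by simp
    qed
    then show "\<exists>n\<ge>N. \<forall>q\<in>P. d (f n q) (\<phi> q) < \<delta>" using n(1) by blast
  qed
  have small: "\<exists>N. \<forall>n\<ge>N. \<epsilon> n < \<eta>" if "\<eta> > 0" for \<eta>
  proof -
    obtain N where "\<forall>n\<ge>N. norm (\<epsilon> n - 0) < \<eta>" using LIMSEQ_D[OF elim \<open>\<eta> > 0\<close>] by blast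
    then show ?thesis by (auto simp: abs_less_iff)
  qed
  have fX: "f n y \<in> X" if "y \<in> Y" for n y using fY that by auto
  have lip: "d (\<phi> y) (\<phi> y') \<le> e y y'" if y: "y \<in> Y" "y' \<in> Y" for y y'
  proof (rule ccontr)
    assume "\<not> ?thesis"
    then have eta: "d (\<phi> y) (\<phi> y') - e y y' > 0" by simp
    define \<eta> where "\<eta> = d (\<phi> y) (\<phi> y') - e y y'"
    have etap: "\<eta> > 0" using eta \<eta>_def by simp
    obtain N where N: "\<forall>n\<ge>N. \<epsilon> n < \<eta> / 8" using small[of "\<eta>/8"] etap by auto
    have "\<exists>n\<ge>N. \<forall>q\<in>{y, y'}. d (f n q) (\<phi> q) < \<eta> / 4"
      by (rule freq) (use y etap in auto)
    then obtain n where n: "n \<ge> N" "\<forall>q\<in>{y, y'}. d (f n q) (\<phi> q) < \<eta> / 4" by blast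
    have "d (\<phi> y) (\<phi> y') \<le> d (\<phi> y) (f n y) + d (f n y) (f n y') + d (f n y') (\<phi> y')"
      by (rule Xm.tri3) (use phiX fX y in auto)
    moreover have "d (\<phi> y) (f n y) < \<eta> / 4" using n(2) Xm.commute by auto
    moreover have "d (f n y') (\<phi> y') < \<eta> / 4" using n(2) by auto
    moreover have "d (f n y) (f n y') \<le> e y y' + 4 * \<epsilon> n" using flip y by auto
    moreover have "\<epsilon> n < \<eta> / 8" using N n(1) by auto
    ultimately show False using \<eta>_def by linarith
  qed
  have lip': "\<forall>x\<in>Y. \<forall>y\<in>Y. d (\<phi> x) (\<phi> y) \<le> e x y" using lip by blast
  have phiYX: "\<phi> \<in> Y \<rightarrow> X" using phiX by auto
  have unif: "\<And>N \<delta>. \<delta> > 0 \<Longrightarrow> \<exists>n\<ge>N. \<forall>y\<in>Y. d (f n y) (\<phi> y) < \<delta>"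
  proof -
    fix N and \<delta> :: real assume dp: "\<delta> > 0"
    have "Ym.mtotally_bounded Y"
      using Ym.compactin_imp_mtotally_bounded Y(5) unfolding compact_space_def by simp
    then obtain P where P: "finite P" "P \<subseteq> Y" "Y \<subseteq> (\<Union>x\<in>P. Ym.mball x (\<delta>/4))"
      unfolding Ym.mtotally_bounded_def using dp by (meson zero_less_divide_iff zero_less_numeral)
    obtain N1 where N1: "\<forall>n\<ge>N1. \<epsilon> n < \<delta> / 16" using small[of "\<delta>/16"] dp by auto
    have "\<exists>n\<ge>max N N1. \<forall>q\<in>P. d (f n q) (\<phi> q) < \<delta> / 4"
      by (rule freq) (use P dp in auto)
    then obtain n where n: "n \<ge> max N N1" "\<forall>q\<in>P. d (f n q) (\<phi> q) < \<delta> / 4" by blast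
    have "\<forall>y\<in>Y. d (f n y) (\<phi> y) < \<delta>"
    proof
      fix y assume y: "y \<in> Y"
      then obtain p where p: "p \<in> P" "e p y < \<delta>/4" using P(3) by auto
      have pY: "p \<in> Y" using p P by auto
      have "d (f n y) (\<phi> y) \<le> d (f n y) (f n p) + d (f n p) (\<phi> p) + d (\<phi> p) (\<phi> y)"
        by (rule Xm.tri3) (use phiX fX y pY in auto)
      moreover have "d (f n y) (f n p) \<le> e y p + 4 * \<epsilon> n" using flip y pY by auto
      moreover have "e y p = e p y" by (rule Ym.commute)
      moreover have "d (\<phi> p) (\<phi> y) \<le> e p y" using lip pY y by auto
      moreover have "\<epsilon> n < \<delta> / 16" using N1 n(1) by auto
      moreover have "d (f n p) (\<phi> p) < \<delta> / 4" using n(2) p by auto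
      ultimately show "d (f n y) (\<phi> y) < \<delta>" using p(2) by linarith
    qed
    then show "\<exists>n\<ge>N. \<forall>y\<in>Y. d (f n y) (\<phi> y) < \<delta>" using n(1) by auto
  qed
  have cont: "continuous_map Ym.mtopology Xm.mtopology \<phi>"
    by (rule lip_continuous[OF Y(1) X(1) phiYX lip'])
  have img_closed: "closedin Xm.mtopology (\<phi> ` Y)"
  proof -
    have "compactin Ym.mtopology Y" using Y(5) unfolding compact_space_def by simp
    then have "compactin Xm.mtopology (\<phi> ` Y)" by (rule image_compactin[OF _ cont])
    then show ?thesis by (rule compactin_imp_closedin[OF Xm.Hausdorff_space_mtopology])
  qed
  have onto: "\<phi> ` Y = X"
  proof
    show "\<phi> ` Y \<subseteq> X" using phiX by auto
    show "X \<subseteq> \<phi> ` Y"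
    proof
      fix x assume x: "x \<in> X"
      show "x \<in> \<phi> ` Y"
      proof (rule ccontr)
        assume nx: "x \<notin> \<phi> ` Y"
        have "openin Xm.mtopology (X - \<phi> ` Y)" using img_closed unfolding closedin_def by simp
        then obtain r where r: "r > 0" "Xm.mball x r \<subseteq> X - \<phi> ` Y"
          using x nx unfolding Xm.openin_mtopology by blast
        obtain N where N: "\<forall>n\<ge>N. \<epsilon> n < r / 16" using small[of "r/16"] r by auto
        have "\<exists>n\<ge>N. \<forall>y\<in>Y. d (f n y) (\<phi> y) < r / 2" by (rule unif) (use r in auto)
        then obtain n where n: "n \<ge> N" "\<forall>y\<in>Y. d (f n y) (\<phi> y) < r / 2" by blast
        obtain y where y: "y \<in> Y" "d x (f n y) \<le> 4 * \<epsilon> n" using fsurj x by blast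
        have "d x (\<phi> y) \<le> d x (f n y) + d (f n y) (\<phi> y)"
          by (rule Xm.triangle) (use x fX phiX y in auto)
        moreover have "\<epsilon> n < r / 16" using N n by auto
        moreover have "d (f n y) (\<phi> y) < r / 2" using n(2) y(1) by blast
        ultimately have "d x (\<phi> y) < r" using y(2) r(1) by linarith
        then have "\<phi> y \<in> Xm.mball x r" using x phiX y by auto
        then show False using r y by auto
      qed
    qed
  qed
  have phi_meas: "\<phi> \<in> measurable \<nu> (mborel X d)"
    by (rule lip_measurable[OF Y(1) X(1) phiYX lip' Y(3) Y(4)])
  have pre_sets: "\<phi> -` A \<inter> Y \<in> sets \<nu>" if "A \<in> sets \<mu>" for A
    using measurable_sets[OF phi_meas, of A] that X(4) Y(3) by simp
  have closed_ineq: "measure \<mu> F \<le> measure \<nu> (\<phi> -` F \<inter> Y)" if F: "closedin Xm.mtopology F" for F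
  proof -
    have FX: "F \<subseteq> X" using closedin_subset[OF F] by simp
    define r where "r k = inverse (real (Suc k))" for k
    have rpos: "r k > 0" for k unfolding r_def by simp
    define R where "R k = {y\<in>Y. \<phi> y \<in> nbhd X d F (r k)}" for k
    have Ro: "openin Ym.mtopology (R k)" for k
      unfolding R_def by (rule lip_preimage_open[OF Y(1) X(1) phiYX lip' nbhd_open[OF X(1) FX]])
    have Rs: "R k \<in> sets \<nu>" for k by (rule open_in_sets[OF mY Ro])
    have bound: "measure \<mu> F \<le> measure \<nu> (R k) + r k" for k
    proof -
      obtain N where N: "\<forall>n\<ge>N. \<epsilon> n < r k / 8" using small[of "r k / 8"] rpos by auto
      have "\<exists>n\<ge>N. \<forall>y\<in>Y. d (f n y) (\<phi> y) < r k / 2" by (rule unif) (use rpos in auto)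
      then obtain n where n: "n \<ge> N" "\<forall>y\<in>Y. d (f n y) (\<phi> y) < r k / 2" by blast
      obtain K where K: "K \<in> sets \<nu>" "K \<subseteq> {y\<in>Y. \<exists>a\<in>F. d (f n y) a < 4 * \<epsilon> n}"
        "measure \<mu> F \<le> measure \<nu> K + 2 * \<epsilon> n" using fmeas F by blast
      have en: "\<epsilon> n < r k / 8" using N n by auto
      have "K \<subseteq> R k"
      proof
        fix y assume "y \<in> K"
        then obtain a where y: "y \<in> Y" and a: "a \<in> F" "d (f n y) a < 4 * \<epsilon> n" using K(2) by auto
        have "d (\<phi> y) a \<le> d (\<phi> y) (f n y) + d (f n y) a"
          by (rule Xm.triangle) (use phiX fX y a FX in auto)
        moreover have "d (\<phi> y) (f n y) < r k / 2" using n(2) y Xm.commute by metis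
        ultimately have "d (\<phi> y) a < r k" using a en by linarith
        then show "y \<in> R k" unfolding R_def nbhd_def using y a phiX by auto
      qed
      then have "measure \<nu> K \<le> measure \<nu> (R k)" using fY.finite_measure_mono Rs by blast
      then show ?thesis using K(3) en rpos[of k] by linarith
    qed
    have dec: "decseq R" unfolding decseq_def
    proof (intro allI impI)
      fix m n :: nat assume "m \<le> n"
      then have "r n \<le> r m" unfolding r_def by (intro le_imp_inverse_le) auto
      from nbhd_mono[OF this, of X d F] show "R n \<subseteq> R m" unfolding R_def by blast
    qed
    have RI: "(\<Inter>k. R k) = \<phi> -` F \<inter> Y"
    proof
      show "\<phi> -` F \<inter> Y \<subseteq> (\<Inter>k. R k)"
      proof
        fix y assume y: "y \<in> \<phi> -` F \<inter> Y"
        then have "\<phi> y \<in> X" "\<phi> y \<in> F" using phiX by auto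
        then show "y \<in> (\<Inter>k. R k)" unfolding R_def nbhd_def using y rpos by force
      qed
      show "(\<Inter>k. R k) \<subseteq> \<phi> -` F \<inter> Y"
      proof
        fix y assume y: "y \<in> (\<Inter>k. R k)"
        then have yY: "y \<in> Y" unfolding R_def by auto
        show "y \<in> \<phi> -` F \<inter> Y"
        proof (rule ccontr)
          assume "y \<notin> \<phi> -` F \<inter> Y"
          then have nF: "\<phi> y \<in> X - F" using yY phiX by auto
          have "openin Xm.mtopology (X - F)" using F unfolding closedin_def by simp
          then obtain \<rho> where \<rho>: "\<rho> > 0" "Xm.mball (\<phi> y) \<rho> \<subseteq> X - F"
            using nF unfolding Xm.openin_mtopology by blast
          obtain k where k: "inverse (real (Suc k)) < \<rho>" using reals_Archimedean[OF \<rho>(1)] by blast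
          have "y \<in> R k" using y by auto
          then obtain a where a: "a \<in> F" "d (\<phi> y) a < r k" unfolding R_def nbhd_def by auto
          then have "a \<in> Xm.mball (\<phi> y) \<rho>" using k FX phiX yY unfolding r_def by auto
          then show False using \<rho> a by auto
        qed
      qed
    qed
    have lim1: "(\<lambda>k. measure \<nu> (R k)) \<longlonglongrightarrow> measure \<nu> (\<phi> -` F \<inter> Y)"
      using fY.finite_Lim_measure_decseq[of R] Rs dec RI by auto
    have lim2: "(\<lambda>k. measure \<nu> (R k) + r k) \<longlonglongrightarrow> measure \<nu> (\<phi> -` F \<inter> Y) + 0"
      by (rule tendsto_add[OF lim1]) (unfold r_def, rule LIMSEQ_inverse_real_of_nat)
    show ?thesis using LIMSEQ_le_const[OF lim2] bound by auto
  qed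
  have meas: "emeasure \<mu> A \<le> emeasure \<nu> (\<phi> -` A \<inter> Y)" if A: "A \<in> sets \<mu>" for A
  proof -
    have "measure \<mu> A \<le> measure \<nu> (\<phi> -` A \<inter> Y)"
    proof (rule field_le_epsilon)
      fix \<delta> :: real assume "\<delta> > 0"
      then obtain F where F: "closedin Xm.mtopology F" "F \<subseteq> A" "measure \<mu> A \<le> measure \<mu> F + \<delta>"
        using inner_reg[OF mX A] by blast
      have "\<phi> -` F \<inter> Y \<subseteq> \<phi> -` A \<inter> Y" using F(2) by auto
      then have "measure \<nu> (\<phi> -` F \<inter> Y) \<le> measure \<nu> (\<phi> -` A \<inter> Y)"
        by (rule fY.finite_measure_mono[OF _ pre_sets[OF A]])
      then show "measure \<mu> A \<le> measure \<nu> (\<phi> -` A \<inter> Y) + \<delta>" using F(3) closed_ineq[OF F(1)] by linarith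
    qed
    then show ?thesis by (simp add: fX.emeasure_eq_measure fY.emeasure_eq_measure)
  qed
  have "\<exists>\<phi>. \<phi> ` Y = X \<and> (\<forall>x\<in>Y. \<forall>y\<in>Y. d (\<phi> x) (\<phi> y) \<le> e x y) \<and>
          (\<forall>A \<in> sets \<mu>. emeasure \<mu> A \<le> emeasure \<nu> (\<phi> -` A \<inter> Y))"
    using onto lip' meas by blast
  then show ?thesis unfolding mms_le_def by simp
qed

theorem proposition3p11:
  fixes S S' :: "nat \<Rightarrow> 'a mms" and Sinf S'inf :: "'a mms"
  assumes "\<And>n. is_mms (S n)" and "\<And>n. is_mms (S' n)"
    and "is_mms Sinf" and "is_mms S'inf"
    and "(\<lambda>n. dGHP (S n) Sinf) \<longlonglongrightarrow> 0"
    and "(\<lambda>n. dGHP (S' n) S'inf) \<longlonglongrightarrow> 0"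
    and "\<And>n. mms_le (S n) (S' n)"
  shows "mms_le Sinf S'inf"
proof -
  obtain X d \<mu> where Sinf: "Sinf = (X, d, \<mu>)" by (metis prod_cases3)
  obtain Y e \<nu> where S'inf: "S'inf = (Y, e, \<nu>)" by (metis prod_cases3)
  have mX: "is_mms (X, d, \<mu>)" using assms(3) Sinf by simp
  have mY: "is_mms (Y, e, \<nu>)" using assms(4) S'inf by simp
  define \<epsilon> where "\<epsilon> k = inverse (real (Suc k))" for k
  have epos: "\<epsilon> k > 0" for k unfolding \<epsilon>_def by simp
  have elim: "\<epsilon> \<longlonglongrightarrow> 0" unfolding \<epsilon>_def by (rule LIMSEQ_inverse_real_of_nat)
  have ev: "\<exists>n. dGHP (S n) Sinf < ereal (\<epsilon> k) \<and> dGHP (S' n) S'inf < ereal (\<epsilon> k)" for k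
  proof -
    have pos: "0 < ereal (\<epsilon> k)" using epos[of k] by simp
    have "eventually (\<lambda>n. dGHP (S n) Sinf < ereal (\<epsilon> k)) sequentially"
      by (rule order_tendstoD(2)[OF assms(5) pos])
    moreover have "eventually (\<lambda>n. dGHP (S' n) S'inf < ereal (\<epsilon> k)) sequentially"
      by (rule order_tendstoD(2)[OF assms(6) pos])
    ultimately have "eventually (\<lambda>n. dGHP (S n) Sinf < ereal (\<epsilon> k) \<and> dGHP (S' n) S'inf < ereal (\<epsilon> k)) sequentially"
      by (rule eventually_conj)
    then show ?thesis unfolding eventually_sequentially by blast
  qed
  have "\<forall>k. \<exists>g. g \<in> Y \<rightarrow> X \<and> (\<forall>y\<in>Y. \<forall>y'\<in>Y. d (g y) (g y') \<le> e y y' + 4 * \<epsilon> k)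
     \<and> (\<forall>x\<in>X. \<exists>y\<in>Y. d x (g y) \<le> 4 * \<epsilon> k)
     \<and> (\<forall>F. closedin (Metric_space.mtopology X d) F \<longrightarrow>
           (\<exists>K\<in>sets \<nu>. K \<subseteq> {y\<in>Y. \<exists>a\<in>F. d (g y) a < 4 * \<epsilon> k} \<and> measure \<mu> F \<le> measure \<nu> K + 2 * \<epsilon> k))"
  proof
    fix k
    obtain n where n: "dGHP (S n) Sinf < ereal (\<epsilon> k)" "dGHP (S' n) S'inf < ereal (\<epsilon> k)" using ev by blast
    obtain Xn dn \<mu>n where Sn: "S n = (Xn, dn, \<mu>n)" by (metis prod_cases3)
    obtain Yn en \<nu>n where S'n: "S' n = (Yn, en, \<nu>n)" by (metis prod_cases3)
    have mXn: "is_mms (Xn, dn, \<mu>n)" using assms(1)[of n] Sn by simp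
    have mYn: "is_mms (Yn, en, \<nu>n)" using assms(2)[of n] S'n by simp
    have le: "mms_le (Xn, dn, \<mu>n) (Yn, en, \<nu>n)" using assms(7)[of n] Sn S'n by simp
    have "dGHP (Xn, dn, \<mu>n) (X, d, \<mu>) < ereal (\<epsilon> k)" using n(1) Sn Sinf by simp
    from ghp_witness[OF mXn mX this]
    obtain Z :: "('a + 'a) set" and dZ \<psi> \<kappa> where c1: "ghp_close Xn dn \<mu>n X d \<mu> Z dZ \<psi> \<kappa> (\<epsilon> k)"
      by blast
    have "dGHP (Yn, en, \<nu>n) (Y, e, \<nu>) < ereal (\<epsilon> k)" using n(2) S'n S'inf by simp
    from ghp_witness[OF mYn mY this]
    obtain Z' :: "('a + 'a) set" and dZ' \<alpha> \<beta> where c2: "ghp_close Yn en \<nu>n Y e \<nu> Z' dZ' \<alpha> \<beta> (\<epsilon> k)"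
      by blast
    show "\<exists>g. g \<in> Y \<rightarrow> X \<and> (\<forall>y\<in>Y. \<forall>y'\<in>Y. d (g y) (g y') \<le> e y y' + 4 * \<epsilon> k)
     \<and> (\<forall>x\<in>X. \<exists>y\<in>Y. d x (g y) \<le> 4 * \<epsilon> k)
     \<and> (\<forall>F. closedin (Metric_space.mtopology X d) F \<longrightarrow>
           (\<exists>K\<in>sets \<nu>. K \<subseteq> {y\<in>Y. \<exists>a\<in>F. d (g y) a < 4 * \<epsilon> k} \<and> measure \<mu> F \<le> measure \<nu> K + 2 * \<epsilon> k))"
      by (rule construct[OF mX mY mXn mYn c1 c2 le])
  qed
  then obtain f where f: "\<forall>k. f k \<in> Y \<rightarrow> X \<and> (\<forall>y\<in>Y. \<forall>y'\<in>Y. d (f k y) (f k y') \<le> e y y' + 4 * \<epsilon> k)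
     \<and> (\<forall>x\<in>X. \<exists>y\<in>Y. d x (f k y) \<le> 4 * \<epsilon> k)
     \<and> (\<forall>F. closedin (Metric_space.mtopology X d) F \<longrightarrow>
           (\<exists>K\<in>sets \<nu>. K \<subseteq> {y\<in>Y. \<exists>a\<in>F. d (f k y) a < 4 * \<epsilon> k} \<and> measure \<mu> F \<le> measure \<nu> K + 2 * \<epsilon> k))"
    by (rule choice[THEN exE]) blast
  have "mms_le (X, d, \<mu>) (Y, e, \<nu>)"
    by (rule core[where f=f, OF mX mY epos elim]) (use f in blast)+
  then show ?thesis using Sinf S'inf by simp
qed

end
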